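(* Let $\mathfrak{g}$ be a $6$-dimensional real nilpotent Lie algebra with first Betti number $b_1=2$ which admits a complex structure. Then $\mathfrak{g}$ is isomorphic to the Lie algebra $(0,0,12,13,23,14+25)$.
   Context: A complex structure on a real Lie algebra $\mathfrak{g}$ is a linear map $J\colon\mathfrak{g}\to\mathfrak{g}$ with $J^2=-1$ and $[JX,JY]=[X,Y]+J[JX,Y]+J[X,JY]$ for all $X,Y\in\mathfrak{g}$. The differential $d\colon\mathfrak{g}^*\to\Lambda^2\mathfrak{g}^*$ is $d\alpha(X,Y)=-\alpha([X,Y])$, and $b_1=\dim\ker(d\colon\mathfrak{g}^*\to\Lambda^2\mathfrak{g}^* )$. Notation for Lie algebras: a $6$-tuple such as $(0,0,12,13,23,14+25)$ denotes the real Lie algebra whose dual has a basis $e^1,\dots,e^6$ with $de^1,\dots,de^6$ given by the successive entries, where $ij$ stands for $e^i\wedge e^j$; thus here $de^1=de^2=0$, $de^3=e^1\wedge e^2$, $de^4=e^1\wedge e^3$, $de^5=e^2\wedge e^3$, $de^6=e^1\wedge e^4+e^2\wedge e^5$. *)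

theory Defs
  imports "HOL-Analysis.Analysis"
begin

definition lie_algebra :: "('a::real_vector \<Rightarrow> 'a \<Rightarrow> 'a) \<Rightarrow> bool" where
  "lie_algebra br \<longleftrightarrow> bilinear br \<and> (\<forall>x. br x x = 0) \<and>
     (\<forall>x y z. br x (br y z) + br y (br z x) + br z (br x y) = 0)"

fun lcs :: "('a::real_vector \<Rightarrow> 'a \<Rightarrow> 'a) \<Rightarrow> nat \<Rightarrow> 'a set" where
  "lcs br 0 = UNIV"
| "lcs br (Suc k) = span {br x y | x y. y \<in> lcs br k}"

definition nilpotent_lie :: "('a::real_vector \<Rightarrow> 'a \<Rightarrow> 'a) \<Rightarrow> bool" where
  "nilpotent_lie br \<longleftrightarrow> (\<exists>k. lcs br k = {0})"

definition complex_structure :: "('a::real_vector \<Rightarrow> 'a \<Rightarrow> 'a) \<Rightarrow> ('a \<Rightarrow> 'a) \<Rightarrow> bool" where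
  "complex_structure br J \<longleftrightarrow> linear J \<and> (\<forall>x. J (J x) = - x) \<and>
     (\<forall>x y. br (J x) (J y) = br x y + J (br (J x) y) + J (br x (J y)))"

text \<open>First Betti number of a Lie algebra on R^n: dimension of the kernel of
d : g* -> Lambda^2 g*, d alpha (X,Y) = - alpha [X,Y].  Linear functionals on
real^'n are identified with vectors a via alpha = (\<lambda>x. a \<bullet> x).\<close>
definition betti1 :: "(real^'n \<Rightarrow> real^'n \<Rightarrow> real^'n) \<Rightarrow> nat" where
  "betti1 br = dim {a::real^'n. \<forall>x y. - (a \<bullet> br x y) = 0}"

definition lie_isomorphic ::
  "('a::real_vector \<Rightarrow> 'a \<Rightarrow> 'a) \<Rightarrow> ('b::real_vector \<Rightarrow> 'b \<Rightarrow> 'b) \<Rightarrow> bool" where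
  "lie_isomorphic br1 br2 \<longleftrightarrow>
     (\<exists>f. linear f \<and> bij f \<and> (\<forall>x y. f (br1 x y) = br2 (f x) (f y)))"

text \<open>The Lie algebra (0,0,12,13,23,14+25) on real^6 with standard basis e_1..e_6
(index 6 of type 6 is written 6).  For x, y, (e^i \<and> e^j)(x,y) = x_i y_j - x_j y_i, and
e^k([x,y]) = - de^k(x,y).\<close>
definition wedge6 :: "real^6 \<Rightarrow> real^6 \<Rightarrow> 6 \<Rightarrow> 6 \<Rightarrow> real" where
  "wedge6 x y i j = x $ i * y $ j - x $ j * y $ i"

definition br_model :: "real^6 \<Rightarrow> real^6 \<Rightarrow> real^6" where
  "br_model x y = (\<chi> k.
     if k = 3 then - wedge6 x y 1 2
     else if k = 4 then - wedge6 x y 1 3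
     else if k = 5 then - wedge6 x y 2 3
     else if k = 6 then - (wedge6 x y 1 4 + wedge6 x y 2 5)
     else 0)"

end

theory Submission
  imports Defs
begin

locale cx =
  fixes br :: "real^6 \<Rightarrow> real^6 \<Rightarrow> real^6" and J :: "real^6 \<Rightarrow> real^6"
  assumes bil: "bilinear br" and alt: "\<And>x. br x x = 0"
  and jac: "\<And>x y z. br x (br y z) + br y (br z x) + br z (br x y) = 0"
  and nil: "\<exists>k. lcs br k = {0}"
  and linJ: "linear J" and JJ: "\<And>x. J (J x) = - x"
  and integ: "\<And>x y. br (J x) (J y) = br x y + J (br (J x) y) + J (br x (J y))"
  and dn: "dim (lcs br 1) = 4"
begin

lemma ladd: "br (x + y) z = br x z + br y z" using bil by (rule bilinear_ladd)
lemma radd: "br x (y + z) = br x y + br x z" using bil by (rule bilinear_radd)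
lemma lmul: "br (c *\<^sub>R x) y = c *\<^sub>R br x y" using bil by (rule bilinear_lmul)
lemma rmul: "br x (c *\<^sub>R y) = c *\<^sub>R br x y" using bil by (rule bilinear_rmul)
lemma lsub: "br (x - y) z = br x z - br y z" using bil by (rule bilinear_lsub)
lemma rsub: "br x (y - z) = br x y - br x z" using bil by (rule bilinear_rsub)
lemma lneg: "br (- x) y = - br x y" using bil by (rule bilinear_lneg)
lemma rneg: "br x (- y) = - br x y" using bil by (rule bilinear_rneg)
lemma lzero: "br 0 y = 0" using bil by (rule bilinear_lzero)
lemma rzero: "br x 0 = 0" using bil by (rule bilinear_rzero)
lemmas brsimps = ladd radd lmul rmul lsub rsub lneg rneg lzero rzero

lemma anti: "br x y = - br y x"
proof -
  have "br (x+y) (x+y) = 0" by (rule alt)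
  hence "br x x + br x y + br y x + br y y = 0" by (simp add: brsimps algebra_simps)
  thus ?thesis using alt[of x] alt[of y] by (simp add: eq_neg_iff_add_eq_0)
qed

lemma Jadd: "J (x + y) = J x + J y" using linJ by (rule linear_add)
lemma Jmul: "J (c *\<^sub>R x) = c *\<^sub>R J x" using linJ by (rule linear_scale)
lemma Jsub: "J (x - y) = J x - J y" using linJ by (rule linear_diff)
lemma Jneg: "J (- x) = - J x" using linJ by (rule linear_neg)
lemma Jzero: "J 0 = 0" using linJ by (rule linear_0)
lemmas Jsimps = Jadd Jmul Jsub Jneg Jzero JJ

abbreviation g :: "nat \<Rightarrow> (real^6) set" where "g k \<equiv> lcs br k"

lemma gsub: "subspace (g k)"
  by (cases k) (auto simp: subspace_span)

lemma gmem: "y \<in> g k \<Longrightarrow> br x y \<in> g (Suc k)"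
  by (auto intro!: span_base)

lemma gmeml: "x \<in> g k \<Longrightarrow> br x y \<in> g (Suc k)"
  using gmem[of x k y] anti[of x y] gsub[of "Suc k"]
  by (metis subspace_neg)

lemma gdec: "g (Suc k) \<subseteq> g k"
proof (induction k)
  case 0 show ?case by simp
next
  case (Suc k)
  have "{br x y | x y. y \<in> g (Suc k)} \<subseteq> {br x y | x y. y \<in> g k}" using Suc by blast
  hence "span {br x y | x y. y \<in> g (Suc k)} \<subseteq> span {br x y | x y. y \<in> g k}" by (rule span_mono)
  thus ?case by simp
qed

lemma gdec_le: "m \<le> k \<Longrightarrow> g k \<subseteq> g m"
proof (induction k rule: dec_induct)
  case base then show ?case by simp
next
  case (step k) then show ?case using gdec[of k] by blast
qed

lemma gstable: "g (Suc k) = g k \<Longrightarrow> g (k + m) = g k"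
proof (induction m)
  case 0 then show ?case by simp
next
  case (Suc m)
  have "g (Suc (k + m)) = span {br x y | x y. y \<in> g (k+m)}" by simp
  also have "\<dots> = span {br x y | x y. y \<in> g k}" using Suc by simp
  also have "\<dots> = g (Suc k)" by simp
  finally show ?case using Suc by simp
qed

lemma gstrict: assumes "g k \<noteq> {0}" shows "dim (g (Suc k)) < dim (g k)"
proof (rule ccontr)
  assume "\<not> ?thesis"
  hence "g (Suc k) = g k" using subspace_dim_equal[OF gsub gsub gdec[of k]] by simp
  obtain K where K: "g K = {0}" using nil by auto
  have "g (k + K) = g k" using gstable \<open>g (Suc k) = g k\<close> by blast
  moreover have "g (k + K) \<subseteq> g K" by (rule gdec_le) simp
  ultimately show False using K assms gsub[of k] subspace_0 by blast
qed

lemma dim0: "dim (g k) = 0 \<Longrightarrow> g k = {0}"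
  using gsub[of k] by (metis dim_eq_0 span_eq_iff subspace_0 subset_singletonD empty_iff insert_iff subsetI subset_antisym span_0 )

end

context cx begin

definition W :: "nat \<Rightarrow> (real^6) set" where
  "W k = {a + J b | a b. a \<in> g k \<and> b \<in> g k}"

lemma Wsub: "subspace (W k)"
  unfolding subspace_def W_def
proof (intro conjI ballI allI)
  show "0 \<in> {a + J b |a b. a \<in> g k \<and> b \<in> g k}"
  proof -
    have "0 = 0 + J 0" by (simp add: Jzero)
    thus ?thesis using gsub[of k] subspace_0 by blast
  qed
next
  fix x y assume "x \<in> {a + J b |a b. a \<in> g k \<and> b \<in> g k}" "y \<in> {a + J b |a b. a \<in> g k \<and> b \<in> g k}"
  then obtain a b a' b' where "x = a + J b" "y = a' + J b'" and abb: "a \<in> g k" "b \<in> g k" "a' \<in> g k" "b' \<in> g k" by auto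
  hence "x + y = (a + a') + J (b + b')" by (simp add: Jsimps)
  moreover have "a + a' \<in> g k" "b + b' \<in> g k" using gsub[of k] subspace_add abb by blast+
  ultimately show "x + y \<in> {a + J b |a b. a \<in> g k \<and> b \<in> g k}" by blast
next
  fix c x assume "x \<in> {a + J b |a b. a \<in> g k \<and> b \<in> g k}"
  then obtain a b where "x = a + J b" and ab: "a \<in> g k" "b \<in> g k" by auto
  hence "c *\<^sub>R x = c *\<^sub>R a + J (c *\<^sub>R b)" by (simp add: Jsimps scaleR_add_right)
  moreover have "c *\<^sub>R a \<in> g k" "c *\<^sub>R b \<in> g k" using gsub[of k] subspace_scale ab by blast+
  ultimately show "c *\<^sub>R x \<in> {a + J b |a b. a \<in> g k \<and> b \<in> g k}" by blast
qed

lemma gW: "x \<in> g k \<Longrightarrow> x \<in> W k"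
proof -
  assume "x \<in> g k"
  moreover have "x = x + J 0" by (simp add: Jzero)
  ultimately show ?thesis unfolding W_def using gsub[of k] subspace_0 by blast
qed

lemma WJ: "x \<in> W k \<Longrightarrow> J x \<in> W k"
proof -
  assume "x \<in> W k"
  then obtain a b where ab: "x = a + J b" "a \<in> g k" "b \<in> g k" unfolding W_def by blast
  hence "J x = (- b) + J a" by (simp add: Jsimps)
  moreover have "- b \<in> g k" using ab gsub[of k] subspace_neg by blast
  ultimately show ?thesis unfolding W_def using ab by blast
qed

lemma Jnotin: assumes V: "subspace V" "\<forall>v\<in>V. J v \<in> V" and u: "u \<notin> V"
  shows "J u \<notin> span (insert u V)"
proof
  assume "J u \<in> span (insert u V)"
  then obtain k where w: "J u - k *\<^sub>R u \<in> V" using span_breakdown_eq span_eq_iff V(1) by (metis scaleR_conv_of_real)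
  hence "J (J u - k *\<^sub>R u) \<in> V" using V by blast
  hence "J (J u - k *\<^sub>R u) + k *\<^sub>R (J u - k *\<^sub>R u) \<in> V" using w V(1) by (simp add: subspace_add subspace_scale)
  moreover have "J (J u - k *\<^sub>R u) + k *\<^sub>R (J u - k *\<^sub>R u) = - ((1 + k^2) *\<^sub>R u)"
    by (simp add: Jsimps algebra_simps power2_eq_square)
  ultimately have "(1 + k^2) *\<^sub>R u \<in> V" using V(1) subspace_neg by fastforce
  hence "(1/(1+k^2)) *\<^sub>R ((1 + k^2) *\<^sub>R u) \<in> V" using V(1) subspace_scale by blast
  moreover have "1 + k^2 \<noteq> 0" by (metis add_pos_nonneg zero_less_one zero_le_power2 less_irrefl)
  ultimately show False using u by simp
qed

lemma jstep: assumes V: "subspace V" "\<forall>v\<in>V. J v \<in> V" and u: "u \<notin> V"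
  shows "dim (insert (J u) (insert u V)) = dim V + 2"
proof -
  have "u \<notin> span V" using u V(1) by (metis span_eq_iff)
  hence "dim (insert u V) = dim V + 1" by (simp add: dim_insert)
  moreover have "J u \<notin> span (insert u V)" by (rule Jnotin[OF V u])
  ultimately show ?thesis by (simp add: dim_insert)
qed

lemma jstep2: assumes V: "subspace V" "\<forall>v\<in>V. J v \<in> V" and u: "u \<notin> V" and U: "V \<subseteq> U" "J u \<in> U" "u \<in> U"
  shows "dim V + 2 \<le> dim U"
  using jstep[OF V u] dim_subset[of "insert (J u) (insert u V)" U] U by auto

lemma Wstep: assumes "W 1 = UNIV" "W (Suc k) = UNIV" shows "W (Suc (Suc k)) = UNIV"
proof -
  have mem: "br x y \<in> W (Suc (Suc k))" for x y
  proof -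
    obtain P Q where x: "x = P + J Q" "P \<in> g (Suc k)" "Q \<in> g (Suc k)" using assms(2) unfolding W_def by blast
    obtain P' Q' where y: "y = P' + J Q'" "P' \<in> g (Suc k)" "Q' \<in> g (Suc k)" using assms(2) unfolding W_def by blast
    have e: "br x y = (br P P' + br P (J Q') + br (J Q) P' + br Q Q') + J (br (J Q) Q' + br Q (J Q'))"
      unfolding x y by (simp add: brsimps integ Jsimps algebra_simps)
    have "br P P' + br P (J Q') + br (J Q) P' + br Q Q' \<in> g (Suc (Suc k))"
      using gsub[of "Suc (Suc k)"] x y by (intro subspace_add gmem gmeml) auto
    moreover have "br (J Q) Q' + br Q (J Q') \<in> g (Suc (Suc k))"
      using gsub[of "Suc (Suc k)"] x y by (intro subspace_add gmem gmeml) auto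
    ultimately show ?thesis unfolding e W_def by blast
  qed
  have g1: "g 1 \<subseteq> W (Suc (Suc k))"
  proof -
    have "g 1 = span {br x y | x y. y \<in> g 0}" by simp
    also have "\<dots> \<subseteq> W (Suc (Suc k))" using mem Wsub by (intro span_minimal) auto
    finally show ?thesis .
  qed
  show ?thesis
  proof (intro set_eqI iffI)
    fix v :: "real^6"
    obtain a b where v: "v = a + J b" "a \<in> g 1" "b \<in> g 1" using assms(1) unfolding W_def by blast
    obtain p q where a: "a = p + J q" "p \<in> g (Suc (Suc k))" "q \<in> g (Suc (Suc k))" using g1 v unfolding W_def by blast
    obtain p' q' where b: "b = p' + J q'" "p' \<in> g (Suc (Suc k))" "q' \<in> g (Suc (Suc k))" using g1 v unfolding W_def by blast
    have "v = (p - q') + J (q + p')" unfolding v a b by (simp add: Jsimps algebra_simps)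
    moreover have "p - q' \<in> g (Suc (Suc k))" "q + p' \<in> g (Suc (Suc k))"
      using a b gsub by (auto intro: subspace_diff subspace_add)
    ultimately show "v \<in> W (Suc (Suc k))" unfolding W_def by blast
  qed auto
qed

lemma W1_not_UNIV: "W 1 \<noteq> UNIV"
proof
  assume h: "W 1 = UNIV"
  have all: "W (Suc k) = UNIV" for k
    by (induction k) (use h Wstep in auto)
  obtain K where K: "g K = {0}" using nil by auto
  have "g (Suc K) \<subseteq> g K" by (rule gdec)
  hence "g (Suc K) = {0}" using K gsub[of "Suc K"] subspace_0 by blast
  hence "W (Suc K) = {0}" unfolding W_def by (auto simp: Jsimps)
  with all[of K] show False by (metis UNIV_I axis_nth  singletonD zero_neq_one zero_index)
qed

end

context cx begin
declare lcs.simps(2)[simp del]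

lemma sg: "span (g k) = g k" using gsub span_eq_iff by blast

lemma gm1: "y \<in> g 1 \<Longrightarrow> br x y \<in> g 2" using gmem[of y 1 x] by (simp add: eval_nat_numeral)
lemma gm1l: "y \<in> g 1 \<Longrightarrow> br y x \<in> g 2" using gmeml[of y 1 x] by (simp add: eval_nat_numeral)
lemma gm2: "y \<in> g 2 \<Longrightarrow> br x y \<in> g 3" using gmem[of y 2 x] by (simp add: eval_nat_numeral)
lemma gm2l: "y \<in> g 2 \<Longrightarrow> br y x \<in> g 3" using gmeml[of y 2 x] by (simp add: eval_nat_numeral)
lemma gm3: "y \<in> g 3 \<Longrightarrow> br x y \<in> g 4" using gmem[of y 3 x] by (simp add: eval_nat_numeral)
lemma gm3l: "y \<in> g 3 \<Longrightarrow> br y x \<in> g 4" using gmeml[of y 3 x] by (simp add: eval_nat_numeral)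
lemma gm4: "y \<in> g 4 \<Longrightarrow> br x y \<in> g 5" using gmem[of y 4 x] by (simp add: eval_nat_numeral)
lemma gm4l: "y \<in> g 4 \<Longrightarrow> br y x \<in> g 5" using gmeml[of y 4 x] by (simp add: eval_nat_numeral)
lemma gd1: "g 2 \<subseteq> g 1" using gdec[of 1] by (simp add: eval_nat_numeral)
lemma gd2: "g 3 \<subseteq> g 2" using gdec[of 2] by (simp add: eval_nat_numeral)
lemma gd3: "g 4 \<subseteq> g 3" using gdec[of 3] by (simp add: eval_nat_numeral)
lemma gd4: "g 5 \<subseteq> g 4" using gdec[of 4] by (simp add: eval_nat_numeral)

lemma dimU: "dim (UNIV :: (real^6) set) = 6" by simp

lemma nJ: "v \<in> g 1 \<Longrightarrow> J v \<in> g 1"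
proof -
  assume v: "v \<in> g 1"
  obtain u where u: "u \<notin> W 1" using W1_not_UNIV by auto
  have "dim (W 1) + 2 \<le> dim (UNIV :: (real^6) set)"
    by (rule jstep2[OF Wsub _ u]) (auto intro: WJ)
  hence "dim (W 1) \<le> dim (g 1)" using dn by simp
  moreover have "g 1 \<subseteq> W 1" using gW by blast
  ultimately have "g 1 = W 1" using subspace_dim_equal[OF gsub Wsub] by blast
  thus ?thesis using v WJ by blast
qed

lemma in_span1: assumes "v - p *\<^sub>R z \<in> S" "subspace S" shows "v \<in> span (insert z S)"
proof -
  have "\<exists>k. v - k *\<^sub>R z \<in> span S" using assms(1) span_superset by blast
  thus ?thesis by (simp add: span_breakdown_eq)
qed

lemma in_span2: assumes "v - p *\<^sub>R z - q *\<^sub>R z' \<in> S" "subspace S" shows "v \<in> span (insert z (insert z' S))"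
proof -
  have "v - p *\<^sub>R z \<in> span (insert z' S)" using assms by (intro in_span1[of _ q]) (auto simp: algebra_simps span_base)
  thus ?thesis by (auto simp: span_breakdown_eq)
qed

end

locale cxX = cx +
  fixes X :: "real^6"
  assumes X: "X \<notin> g 1"
begin

abbreviation "Y \<equiv> J X"
abbreviation "Z \<equiv> br X Y"
abbreviation "A \<equiv> br X Z"
abbreviation "B \<equiv> br Y Z"

lemma YX: "br Y X = - Z" by (rule anti)

lemma span_all: "span (insert Y (insert X (g 1))) = UNIV"
proof -
  have "dim (insert Y (insert X (g 1))) = dim (g 1) + 2"
    by (rule jstep[OF gsub _ X]) (use nJ in blast)
  hence "dim (insert Y (insert X (g 1))) = DIM(real^6)" using dn by simp
  thus ?thesis using dim_eq_full by blast
qed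

lemma decomp: obtains a b w where "w \<in> g 1" "v = a *\<^sub>R X + b *\<^sub>R Y + w"
proof -
  have "v \<in> span (insert Y (insert X (g 1)))" using span_all by simp
  then obtain b where "v - b *\<^sub>R Y \<in> span (insert X (g 1))" by (auto simp: span_breakdown_eq)
  then obtain a where "v - b *\<^sub>R Y - a *\<^sub>R X \<in> span (g 1)" by (auto simp: span_breakdown_eq)
  hence "v - b *\<^sub>R Y - a *\<^sub>R X \<in> g 1" by (metis sg)
  moreover have "v = a *\<^sub>R X + b *\<^sub>R Y + (v - b *\<^sub>R Y - a *\<^sub>R X)" by simp
  ultimately show ?thesis using that by blast
qed

lemma n_sub: "g 1 \<subseteq> span (insert Z (g 2))"
proof -
  have "br x y \<in> span (insert Z (g 2))" for x y
  proof -
    obtain a b w where w: "w \<in> g 1" "x = a *\<^sub>R X + b *\<^sub>R Y + w" by (rule decomp)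
    obtain c d w' where w': "w' \<in> g 1" "y = c *\<^sub>R X + d *\<^sub>R Y + w'" by (rule decomp)
    have e: "br x y - (a*d - b*c) *\<^sub>R Z = a *\<^sub>R br X w' + b *\<^sub>R br Y w' + c *\<^sub>R br w X + d *\<^sub>R br w Y + br w w'"
      unfolding w w' by (simp add: ladd radd lmul rmul alt YX algebra_simps)
    have "a *\<^sub>R br X w' + b *\<^sub>R br Y w' + c *\<^sub>R br w X + d *\<^sub>R br w Y + br w w' \<in> g 2"
      using gsub[of 2] w w' gm1 gm1l
      by (intro subspace_add[OF gsub] subspace_scale[OF gsub] gm1 gm1l w w')
    hence "br x y - (a*d - b*c) *\<^sub>R Z \<in> g 2" using e by simp
    thus ?thesis by (rule in_span1[OF _ gsub])
  qed
  hence "{br x y | x y. y \<in> g 0} \<subseteq> span (insert Z (g 2))" by blast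
  hence "span {br x y | x y. y \<in> g 0} \<subseteq> span (insert Z (g 2))" by (simp add: span_minimal)
  thus ?thesis by (simp add: lcs.simps(2))
qed

lemma g1_ne: "g 1 \<noteq> {0}"
proof
  assume "g 1 = {0}"
  hence "dim (g 1) = 0" by simp
  with dn show False by simp
qed

lemma dim2: "dim (g 2) = 3"
proof -
  have "dim (g 1) \<le> dim (span (insert Z (g 2)))" by (rule dim_subset[OF n_sub])
  hence "dim (g 1) \<le> dim (insert Z (g 2))" by (simp only: dim_span)
  also have "\<dots> \<le> dim (g 2) + 1" by (simp add: dim_insert)
  finally have "3 \<le> dim (g 2)" using dn by simp
  moreover have "dim (g 2) < dim (g 1)" using gstrict[OF g1_ne] by (simp add: eval_nat_numeral)
  ultimately show ?thesis using dn by simp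
qed

lemma W2: "W 2 = g 1"
proof -
  have sub: "W 2 \<subseteq> g 1"
  proof
    fix v assume "v \<in> W 2"
    then obtain a b where "v = a + J b" "a \<in> g 2" "b \<in> g 2" unfolding W_def by blast
    moreover have "g 2 \<subseteq> g 1" by (rule gd1)
    ultimately show "v \<in> g 1" using nJ gsub[of 1] subspace_add by blast
  qed
  show ?thesis
  proof (rule ccontr)
    assume "W 2 \<noteq> g 1"
    then obtain u where u: "u \<in> g 1" "u \<notin> W 2" using sub by blast
    have "dim (W 2) + 2 \<le> dim (g 1)"
      by (rule jstep2[OF Wsub _ u(2) sub]) (use WJ nJ u in blast)+
    moreover have "dim (g 2) \<le> dim (W 2)" by (rule dim_subset) (use gW in blast)
    ultimately show False using dim2 dn by simp
  qed
qed

end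

context cxX begin

lemma br_g1: "br x y \<in> g 1"
  using gmem[of y 0 x] by simp

lemma Zg1: "Z \<in> g 1" by (rule br_g1)
lemma Ag2: "A \<in> g 2" using gm1[OF Zg1] .
lemma Bg2: "B \<in> g 2" using gm1[OF Zg1] .

lemma XB: "br X B = br Y A"
proof -
  have "br X B + br Y (br Z X) + br Z Z = 0" by (rule jac)
  moreover have "br Z X = - A" by (rule anti)
  ultimately show ?thesis by (simp add: alt rneg)
qed

lemma inS: "v \<in> span (insert z S) \<Longrightarrow> subspace S \<Longrightarrow> \<exists>e. v - e *\<^sub>R z \<in> S"
  using span_breakdown_eq span_eq_iff by metis

lemma g1dec: assumes "w \<in> g 1" obtains e u where "u \<in> g 2" "w = e *\<^sub>R Z + u"
proof -
  obtain e where "w - e *\<^sub>R Z \<in> g 2" using inS[OF subsetD[OF n_sub assms] gsub] by blast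
  thus ?thesis using that[of "w - e *\<^sub>R Z" e] by simp
qed

lemma ZL: assumes "v \<in> g k" shows "br Z v \<in> g (Suc (Suc k))"
proof -
  have "br X (br Y v) + br Y (br v X) + br v Z = 0" by (rule jac)
  moreover have "br v Z = - br Z v" by (rule anti)
  ultimately have e: "br Z v = br X (br Y v) + br Y (br v X)" by (simp add: algebra_simps eq_neg_iff_add_eq_0)
  show ?thesis unfolding e using assms gsub
    by (intro subspace_add[OF gsub] gmem gmeml)
qed

lemma ZL2: "v \<in> g 2 \<Longrightarrow> br Z v \<in> g 4"
  using ZL[of v 2] by (simp add: eval_nat_numeral)
lemma ZL3: "v \<in> g 3 \<Longrightarrow> br Z v \<in> g 4"
  using ZL[of v 3] gd4 by (auto simp: eval_nat_numeral)

lemma UA: assumes "u \<in> g 2" shows "br u A \<in> g 4"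
proof -
  have "br u (br X Z) + br X (br Z u) + br Z (br u X) = 0" by (rule jac)
  hence e: "br u A = - (br X (br Z u) + br Z (br u X))" by (subst eq_neg_iff_add_eq_0) (simp only: add.assoc)
  have "br Z u \<in> g 3" by (rule gm2[OF assms])
  hence "br X (br Z u) \<in> g 4" by (rule gm3)
  moreover have "br Z (br u X) \<in> g 4" by (rule ZL3[OF gm2l[OF assms]])
  ultimately show ?thesis unfolding e using gsub subspace_add subspace_neg by blast
qed

lemma UB: assumes "u \<in> g 2" shows "br u B \<in> g 4"
proof -
  have "br u (br Y Z) + br Y (br Z u) + br Z (br u Y) = 0" by (rule jac)
  hence e: "br u B = - (br Y (br Z u) + br Z (br u Y))" by (subst eq_neg_iff_add_eq_0) (simp only: add.assoc)
  have "br Z u \<in> g 3" by (rule gm2[OF assms])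
  hence "br Y (br Z u) \<in> g 4" by (rule gm3)
  moreover have "br Z (br u Y) \<in> g 4" by (rule ZL3[OF gm2l[OF assms]])
  ultimately show ?thesis unfolding e using gsub subspace_add subspace_neg by blast
qed

end

context cxX begin

lemma g2_sub: "g 2 \<subseteq> span (insert A (insert B (g 3)))"
proof -
  have "br x y \<in> span (insert A (insert B (g 3)))" if y: "y \<in> g 1" for x y
  proof -
    obtain a b w where w: "w \<in> g 1" "x = a *\<^sub>R X + b *\<^sub>R Y + w" by (rule decomp)
    obtain e' u' where u': "u' \<in> g 2" "w = e' *\<^sub>R Z + u'" by (rule g1dec[OF w(1)])
    obtain e u where u: "u \<in> g 2" "y = e *\<^sub>R Z + u" by (rule g1dec[OF y])
    have e1: "br x Z = a *\<^sub>R A + b *\<^sub>R B + br u' Z"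
      unfolding w(2) u'(2) by (simp add: ladd lmul alt)
    have e2: "br x y - (e*a) *\<^sub>R A - (e*b) *\<^sub>R B = e *\<^sub>R br u' Z + br x u"
      unfolding u(2) by (simp add: radd rmul e1 algebra_simps)
    have "e *\<^sub>R br u' Z + br x u \<in> g 3"
      by (intro subspace_add[OF gsub] subspace_scale[OF gsub] gm2l gm2 u u')
    hence "br x y - (e*a) *\<^sub>R A - (e*b) *\<^sub>R B \<in> g 3" using e2 by simp
    thus ?thesis by (rule in_span2[OF _ gsub])
  qed
  hence "{br x y | x y. y \<in> g 1} \<subseteq> span (insert A (insert B (g 3)))" by blast
  hence "span {br x y | x y. y \<in> g 1} \<subseteq> span (insert A (insert B (g 3)))" by (simp add: span_minimal)
  thus ?thesis by (simp add: lcs.simps(2) eval_nat_numeral)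
qed

lemma g3_sub: "g 3 \<subseteq> span (insert (br X A) (insert (br Y A) (insert (br Y B) (g 4))))"
proof -
  have "br x y \<in> span (insert (br X A) (insert (br Y A) (insert (br Y B) (g 4))))" if y: "y \<in> g 2" for x y
  proof -
    obtain a b w where w: "w \<in> g 1" "x = a *\<^sub>R X + b *\<^sub>R Y + w" by (rule decomp)
    obtain e' u' where u': "u' \<in> g 2" "w = e' *\<^sub>R Z + u'" by (rule g1dec[OF w(1)])
    obtain p where "y - p *\<^sub>R A \<in> span (insert B (g 3))"
      using subsetD[OF g2_sub y] span_breakdown_eq by blast
    then obtain q where "y - p *\<^sub>R A - q *\<^sub>R B \<in> span (g 3)"
      using span_breakdown_eq by blast
    hence uu: "y - p *\<^sub>R A - q *\<^sub>R B \<in> g 3" by (simp only: sg)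
    define u where "u = y - p *\<^sub>R A - q *\<^sub>R B"
    have u: "u \<in> g 3" "y = p *\<^sub>R A + q *\<^sub>R B + u" using uu unfolding u_def by simp_all
    have eA: "br x A = a *\<^sub>R br X A + b *\<^sub>R br Y A + (e' *\<^sub>R br Z A + br u' A)"
      unfolding w(2) u'(2) by (simp add: ladd lmul)
    have eB: "br x B = a *\<^sub>R br Y A + b *\<^sub>R br Y B + (e' *\<^sub>R br Z B + br u' B)"
      unfolding w(2) u'(2) by (simp add: ladd lmul XB)
    have e2: "br x y - (p*a) *\<^sub>R br X A - (p*b + q*a) *\<^sub>R br Y A - (q*b) *\<^sub>R br Y B
       = p *\<^sub>R (e' *\<^sub>R br Z A + br u' A) + q *\<^sub>R (e' *\<^sub>R br Z B + br u' B) + br x u"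
      unfolding u(2) by (simp add: radd rmul eA eB algebra_simps)
    have "p *\<^sub>R (e' *\<^sub>R br Z A + br u' A) + q *\<^sub>R (e' *\<^sub>R br Z B + br u' B) + br x u \<in> g 4"
      by (intro subspace_add[OF gsub] subspace_scale[OF gsub] ZL2 UA UB gm3 u u' Ag2 Bg2)
    hence h: "br x y - (p*a) *\<^sub>R br X A - (p*b + q*a) *\<^sub>R br Y A - (q*b) *\<^sub>R br Y B \<in> g 4"
      using e2 by simp
    have "br x y - (p*a) *\<^sub>R br X A \<in> span (insert (br Y A) (insert (br Y B) (g 4)))"
      by (rule in_span2[OF h gsub])
    thus ?thesis by (auto simp: span_breakdown_eq)
  qed
  hence "{br x y | x y. y \<in> g 2} \<subseteq> span (insert (br X A) (insert (br Y A) (insert (br Y B) (g 4))))" by blast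
  hence "span {br x y | x y. y \<in> g 2} \<subseteq> span (insert (br X A) (insert (br Y A) (insert (br Y B) (g 4))))" by (simp add: span_minimal)
  thus ?thesis by (simp add: lcs.simps(2) eval_nat_numeral)
qed

definition S :: "real^6 \<Rightarrow> real^6" where "S U = br X U + J (br Y U)"

lemma SJ: "br X (J Q) + J (br Y (J Q)) = J (br X Q) - br Y Q"
proof -
  have "br Y (J Q) = br X Q + J (br Y Q) + J (br X (J Q))" by (rule integ)
  hence "J (br Y (J Q)) = J (br X Q) - br Y Q - br X (J Q)" by (simp add: Jsimps)
  thus ?thesis by simp
qed

lemma Sstep: assumes "U \<in> W k" shows "S U \<in> W (Suc k)"
proof -
  obtain P Q where PQ: "U = P + J Q" "P \<in> g k" "Q \<in> g k" using assms unfolding W_def by blast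
  have "S U = (br X P - br Y Q) + J (br Y P + br X Q)"
    unfolding S_def PQ(1) using SJ[of Q] by (simp add: radd Jsimps algebra_simps)
  moreover have "br X P - br Y Q \<in> g (Suc k)" "br Y P + br X Q \<in> g (Suc k)"
    using PQ by (auto intro!: subspace_diff[OF gsub] subspace_add[OF gsub] gmem)
  ultimately show ?thesis unfolding W_def by blast
qed

lemma SZ: "A + J B \<in> W 3"
proof -
  have "Z \<in> W 2" using W2 Zg1 by simp
  hence "S Z \<in> W 3" using Sstep[of Z 2] by (simp add: eval_nat_numeral)
  thus ?thesis by (simp add: S_def)
qed

lemma SS: "br X A - br Y B + 2 *\<^sub>R J (br Y A) \<in> W 4"
proof -
  have "S (A + J B) \<in> W 4" using Sstep[OF SZ] by (simp add: eval_nat_numeral)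
  moreover have "S (A + J B) = br X A - br Y B + 2 *\<^sub>R J (br Y A)"
    unfolding S_def using SJ[of B] XB by (simp add: radd Jsimps algebra_simps scaleR_2)
  ultimately show ?thesis by simp
qed

end

context cx begin

lemma nz: assumes "0 < dim (g k)" shows "g k \<noteq> {0}"
proof
  assume "g k = {0}"
  hence "dim (g k) = 0" by simp
  with assms show False by simp
qed

lemma dim_ins_le: "dim (insert x (S :: (real^6) set)) \<le> dim S + 1"
  by (cases "x \<in> span S") (simp_all add: dim_insert)

lemma e1: "E \<in> span {E, J E}" by (rule span_base) simp
lemma e2: "J E \<in> span {E, J E}" by (rule span_base) simp

lemma dim1E: assumes "dim (g k) = 1" obtains E where "E \<noteq> 0" "g k = span {E}"
proof -
  obtain Bs where Bs: "Bs \<subseteq> g k" "independent Bs" "g k \<subseteq> span Bs" "card Bs = dim (g k)"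
    using basis_exists[of "g k"] by blast
  have "card Bs = 1" using Bs(4) assms by simp
  then obtain E where E: "Bs = {E}" by (rule card_1_singletonE)
  have "E \<noteq> 0" using Bs(2) E dependent_zero by blast
  moreover have "span {E} \<subseteq> g k" using Bs(1) E by (intro span_minimal[OF _ gsub]) simp
  ultimately show ?thesis using that Bs(3) E by blast
qed

lemma indepJ: assumes "C \<noteq> 0" "p *\<^sub>R C + q *\<^sub>R J C = 0" shows "p = 0 \<and> q = 0"
proof -
  have "J (p *\<^sub>R C + q *\<^sub>R J C) = 0" using assms(2) Jzero by simp
  hence h2: "p *\<^sub>R J C - q *\<^sub>R C = 0" by (simp add: Jsimps)
  have "p *\<^sub>R (p *\<^sub>R C + q *\<^sub>R J C) - q *\<^sub>R (p *\<^sub>R J C - q *\<^sub>R C) = (p^2 + q^2) *\<^sub>R C"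
    by (simp add: algebra_simps power2_eq_square)
  hence "(p^2+q^2) *\<^sub>R C = 0" using assms(2) h2 by simp
  hence "p^2 + q^2 = 0" using assms(1) by simp
  thus ?thesis by simp
qed

lemma in_single: "a \<in> span {E} \<Longrightarrow> \<exists>s. a = s *\<^sub>R E"
  by (auto simp: span_singleton)

lemma Jspan: assumes "v \<in> span {E, J E}" shows "J v \<in> span {E, J E}"
proof -
  obtain s where "v - s *\<^sub>R E \<in> span {J E}" using assms span_breakdown_eq by blast
  then obtain t where "v - s *\<^sub>R E = t *\<^sub>R J E" using in_single by blast
  hence "v = s *\<^sub>R E + t *\<^sub>R J E" by (simp add: algebra_simps)
  hence "J v = s *\<^sub>R J E - t *\<^sub>R E" by (simp add: Jsimps)
  thus ?thesis by (simp only:) (intro span_diff span_scale e1 e2)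
qed

lemma dim_pair: "dim {a, b :: real^6} \<le> 2"
proof -
  have "dim {a, b} \<le> dim {b} + 1" by (rule dim_ins_le)
  moreover have "dim {b} \<le> dim ({}::(real^6) set) + 1" by (rule dim_ins_le)
  ultimately show ?thesis by simp
qed

end

context cxX begin

lemma g2ne: "g 2 \<noteq> {0}" using dim2 by (intro nz) simp

lemma d3_bounds: "1 \<le> dim (g 3)" "dim (g 3) < 3"
proof -
  have "dim (g 2) \<le> dim (span (insert A (insert B (g 3))))" by (rule dim_subset[OF g2_sub])
  also have "\<dots> \<le> dim (g 3) + 2" using dim_ins_le[of A "insert B (g 3)"] dim_ins_le[of B "g 3"] by simp
  finally show "1 \<le> dim (g 3)" using dim2 by simp
  show "dim (g 3) < 3" using gstrict[OF g2ne] dim2 by (simp add: eval_nat_numeral)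
qed

lemma no_d3_2: assumes A3: "A \<in> g 3" and d3: "dim (g 3) = 2" shows False
proof -
  have XA4: "br X A \<in> g 4" by (rule gm3[OF A3])
  have YA4: "br Y A \<in> g 4" by (rule gm3[OF A3])
  have sub1: "g 3 \<subseteq> span (insert B' (g 4))" if "B' = br Y B" for B'
  proof -
    have "insert (br X A) (insert (br Y A) (insert B' (g 4))) \<subseteq> span (insert B' (g 4))"
      using XA4 YA4 by (auto intro: span_base)
    hence "span (insert (br X A) (insert (br Y A) (insert B' (g 4)))) \<subseteq> span (insert B' (g 4))"
      by (rule span_minimal[OF _ subspace_span])
    thus ?thesis using g3_sub that by blast
  qed
  have "dim (g 3) \<le> dim (span (insert (br Y B) (g 4)))" by (rule dim_subset[OF sub1]) simp
  also have "\<dots> \<le> dim (g 4) + 1" using dim_ins_le by simp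
  finally have "1 \<le> dim (g 4)" using d3 by simp
  moreover have "g 3 \<noteq> {0}" using d3 by (intro nz) simp
  hence "dim (g 4) < dim (g 3)" using gstrict by (simp add: eval_nat_numeral)
  ultimately have d4: "dim (g 4) = 1" using d3 by simp
  obtain E where E: "E \<noteq> 0" "g 4 = span {E}" by (rule dim1E[OF d4])
  have g4E: "g 4 \<subseteq> span {E, J E}" unfolding E(2) by (rule span_mono) auto
  have W4sub: "W 4 \<subseteq> span {E, J E}"
  proof
    fix v assume "v \<in> W 4"
    then obtain a b where ab: "v = a + J b" "a \<in> g 4" "b \<in> g 4" unfolding W_def by blast
    obtain s where s: "a = s *\<^sub>R E" using in_single ab(2) E(2) by blast
    obtain t where t: "b = t *\<^sub>R E" using in_single ab(3) E(2) by blast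
    have "v = s *\<^sub>R E + t *\<^sub>R J E" using ab s t by (simp add: Jsimps)
    thus "v \<in> span {E, J E}" by (simp only:) (intro span_add span_scale e1 e2)
  qed
  have XAs: "br X A \<in> span {E, J E}" using XA4 g4E by blast
  obtain t where t: "br Y A = t *\<^sub>R E" using in_single YA4 E(2) by blast
  have JYAs: "J (br Y A) \<in> span {E, J E}" unfolding t Jmul by (intro span_scale e2)
  have SSs: "br X A - br Y B + 2 *\<^sub>R J (br Y A) \<in> span {E, J E}" using SS W4sub by blast
  have "br Y B = br X A + 2 *\<^sub>R J (br Y A) - (br X A - br Y B + 2 *\<^sub>R J (br Y A))" by simp
  moreover have "br X A + 2 *\<^sub>R J (br Y A) \<in> span {E, J E}" by (rule span_add[OF XAs span_scale[OF JYAs]])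
  hence "br X A + 2 *\<^sub>R J (br Y A) - (br X A - br Y B + 2 *\<^sub>R J (br Y A)) \<in> span {E, J E}"
    by (rule span_diff[OF _ SSs])
  ultimately have Ds: "br Y B \<in> span {E, J E}" by simp
  have "insert (br Y B) (g 4) \<subseteq> span {E, J E}" using Ds g4E by blast
  hence "span (insert (br Y B) (g 4)) \<subseteq> span {E, J E}" by (rule span_minimal[OF _ subspace_span])
  hence sub2: "g 3 \<subseteq> span {E, J E}" using sub1 by blast
  have "dim (span {E, J E}) \<le> dim (g 3)" using dim_pair d3 by simp
  hence g3eq: "g 3 = span {E, J E}" by (rule subspace_dim_equal[OF gsub subspace_span sub2])
  have g3J: "J v \<in> g 3" if "v \<in> g 3" for v using Jspan that g3eq by simp
  have "A + J B \<in> g 3"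
  proof -
    obtain a b where ab: "A + J B = a + J b" "a \<in> g 3" "b \<in> g 3" using SZ unfolding W_def by blast
    have "a + J b \<in> g 3" by (rule subspace_add[OF gsub ab(2) g3J[OF ab(3)]])
    thus ?thesis using ab(1) by simp
  qed
  hence "J B \<in> g 3" using A3 subspace_diff[OF gsub, of "A + J B" 3 A] by simp
  hence "J (J B) \<in> g 3" by (rule g3J)
  hence B3: "B \<in> g 3" using subspace_neg[OF gsub, of "J (J B)" 3] by (simp add: JJ)
  have "insert A (insert B (g 3)) \<subseteq> g 3" using A3 B3 by blast
  hence "span (insert A (insert B (g 3))) \<subseteq> g 3" by (rule span_minimal[OF _ gsub])
  hence "g 2 \<subseteq> g 3" using g2_sub by blast
  hence "dim (g 2) \<le> dim (g 3)" by (rule dim_subset)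
  thus False using dim2 d3 by simp
qed

end

context cxX begin

lemma no_d3: assumes d3: "dim (g 3) = 2" shows False
proof (cases "A \<in> g 3")
  case True thus ?thesis using no_d3_2 d3 by blast
next
  case nA: False
  have "B \<in> span (insert A (g 3))"
  proof (rule ccontr)
    assume nB: "B \<notin> span (insert A (g 3))"
    have "A \<notin> span (g 3)" using nA by (simp add: sg)
    hence "dim (insert A (g 3)) = dim (g 3) + 1" by (simp add: dim_insert)
    hence "dim (insert B (insert A (g 3))) = dim (g 3) + 2" using nB by (simp add: dim_insert)
    moreover have "insert B (insert A (g 3)) \<subseteq> g 2" using Ag2 Bg2 gd2 by blast
    hence "dim (insert B (insert A (g 3))) \<le> dim (g 2)" by (rule dim_subset)
    ultimately show False using dim2 d3 by simp
  qed
  then obtain k where "B - k *\<^sub>R A \<in> span (g 3)" using span_breakdown_eq by blast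
  hence k: "B - k *\<^sub>R A \<in> g 3" by (simp only: sg)
  define X' where "X' = Y - k *\<^sub>R X"
  have JX': "J X' = - X - k *\<^sub>R Y" by (simp add: X'_def Jsimps)
  have X'n: "X' \<notin> g 1"
  proof
    assume h: "X' \<in> g 1"
    hence "J X' \<in> g 1" by (rule nJ)
    hence "J X' + k *\<^sub>R X' \<in> g 1" using h by (intro subspace_add[OF gsub] subspace_scale[OF gsub])
    moreover have "J X' + k *\<^sub>R X' = - ((1 + k^2) *\<^sub>R X)" unfolding JX' by (simp add: X'_def algebra_simps power2_eq_square)
    ultimately have "- ((1 + k^2) *\<^sub>R X) \<in> g 1" by simp
    hence "- (1/(1+k^2)) *\<^sub>R (- ((1 + k^2) *\<^sub>R X)) \<in> g 1" by (rule subspace_scale[OF gsub])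
    moreover have "1 + k^2 \<noteq> 0" by (metis add_pos_nonneg zero_less_one zero_le_power2 less_irrefl)
    ultimately show False using X by simp
  qed
  have cx': "cxX br J X'" using X'n by (intro cxX.intro cxX_axioms.intro cx_axioms)
  have Z': "br X' (J X') = (1 + k^2) *\<^sub>R Z"
  proof -
    have "br X' (J X') = br (Y - k *\<^sub>R X) (- X - k *\<^sub>R Y)" by (simp only: JX') (simp add: X'_def)
    also have "\<dots> = (1 + k^2) *\<^sub>R Z" by (simp add: brsimps alt YX algebra_simps power2_eq_square)
    finally show ?thesis .
  qed
  have A': "br X' (br X' (J X')) = (1 + k^2) *\<^sub>R (B - k *\<^sub>R A)"
    unfolding Z' by (simp add: X'_def brsimps algebra_simps)
  have "br X' (br X' (J X')) \<in> g 3" unfolding A' using k by (rule subspace_scale[OF gsub])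
  thus False using cxX.no_d3_2[OF cx'] d3 by blast
qed

end

context cxX begin

lemma iso: assumes d3: "dim (g 3) = 1" shows "lie_isomorphic br br_model"
proof -
  have g3ne: "g 3 \<noteq> {0}" using d3 by (intro nz) simp
  have "dim (g 4) < dim (g 3)" using gstrict[OF g3ne] by (simp add: eval_nat_numeral)
  hence g4: "g 4 = {0}" using d3 by (intro dim0) simp
  obtain C0 where C0: "C0 \<noteq> 0" "g 3 = span {C0}" by (rule dim1E[OF d3])
  have SS0: "br X A - br Y B + 2 *\<^sub>R J (br Y A) = 0"
  proof -
    obtain a b where ab: "br X A - br Y B + 2 *\<^sub>R J (br Y A) = a + J b" "a \<in> g 4" "b \<in> g 4"
      using SS unfolding W_def by blast
    thus ?thesis using g4 by (simp add: Jzero)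
  qed
  obtain al where al: "br X A = al *\<^sub>R C0" using in_single gm2[OF Ag2] C0(2) by blast
  obtain be where be: "br Y B = be *\<^sub>R C0" using in_single gm2[OF Bg2] C0(2) by blast
  obtain ga where ga: "br Y A = ga *\<^sub>R C0" using in_single gm2[OF Ag2] C0(2) by blast
  have "(al - be) *\<^sub>R C0 + (2 * ga) *\<^sub>R J C0 = 0" using SS0 unfolding al be ga
    by (simp add: Jsimps algebra_simps)
  hence "al - be = 0 \<and> 2 * ga = 0" by (rule indepJ[OF C0(1)])
  hence abg: "be = al" "ga = 0" by auto
  have YB: "br Y B = br X A" using al be abg by simp
  have YA: "br Y A = 0" using ga abg by simp
  have XB0: "br X B = 0" using XB YA by simp
  have al0: "al \<noteq> 0"
  proof
    assume "al = 0"
    hence "br X A = 0" "br Y B = 0" using al YB by auto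
    hence "g 3 \<subseteq> span (insert 0 (insert 0 (insert 0 (g 4))))" using g3_sub YA by simp
    hence "g 3 \<subseteq> {0}" using g4 by simp
    hence "g 3 = {0}" using gsub[of 3] subspace_0 by blast
    thus False using g3ne by simp
  qed
  define C where "C = br X A"
  have Cne: "C \<noteq> 0" using al al0 C0(1) C_def by simp
  have C3: "C \<in> g 3" unfolding C_def by (rule gm2[OF Ag2])
  have Cc: "br v C = 0" for v using gm3[OF C3, of v] g4 by simp
  have Cc': "br C v = 0" for v using gm3l[OF C3, of v] g4 by simp
  have ZA: "br Z A = 0" using ZL2[OF Ag2] g4 by simp
  have ZB: "br Z B = 0" using ZL2[OF Bg2] g4 by simp
  have AB: "br A B = 0" using UB[OF Ag2] g4 by simp
  define Bs where "Bs = {X, Y, Z, A, B, C}"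
  have sp3: "g 3 \<subseteq> span Bs"
  proof -
    have "C0 = (1/al) *\<^sub>R C" using al al0 C_def by simp
    hence "C0 \<in> span Bs" unfolding Bs_def by (simp add: span_base span_scale)
    hence "span {C0} \<subseteq> span Bs" by (intro span_minimal[OF _ subspace_span]) simp
    thus ?thesis using C0(2) by simp
  qed
  have sp2: "g 2 \<subseteq> span Bs"
  proof -
    have "insert A (insert B (g 3)) \<subseteq> span Bs" using sp3 unfolding Bs_def by (auto intro: span_base)
    hence "span (insert A (insert B (g 3))) \<subseteq> span Bs" by (rule span_minimal[OF _ subspace_span])
    thus ?thesis using g2_sub by blast
  qed
  have sp1: "g 1 \<subseteq> span Bs"
  proof -
    have "insert Z (g 2) \<subseteq> span Bs" using sp2 unfolding Bs_def by (auto intro: span_base)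
    hence "span (insert Z (g 2)) \<subseteq> span Bs" by (rule span_minimal[OF _ subspace_span])
    thus ?thesis using n_sub by blast
  qed
  have spU: "span Bs = UNIV"
  proof -
    have "insert Y (insert X (g 1)) \<subseteq> span Bs" using sp1 unfolding Bs_def by (auto intro: span_base)
    hence "span (insert Y (insert X (g 1))) \<subseteq> span Bs" by (rule span_minimal[OF _ subspace_span])
    thus ?thesis using span_all by blast
  qed
  define G where "G = (\<lambda>v::real^6. (v$1) *\<^sub>R X + (v$2) *\<^sub>R Y - (v$3) *\<^sub>R Z + (v$4) *\<^sub>R A + (v$5) *\<^sub>R B - (v$6) *\<^sub>R C)"
  have linG: "linear G"
    by (rule linearI) (simp_all add: G_def algebra_simps)
  have "Bs \<subseteq> range G"
  proof -
    have "G (axis 1 1) = X" "G (axis 2 1) = Y" "G (axis 3 (-1)) = Z" "G (axis 4 1) = A"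
         "G (axis 5 1) = B" "G (axis 6 (-1)) = C"
      by (simp_all add: G_def axis_def)
    thus ?thesis unfolding Bs_def by (metis image_eqI UNIV_I insert_subset empty_subsetI)
  qed
  hence "span Bs \<subseteq> span (range G)" by (rule span_mono)
  also have "span (range G) = range G" using span_linear_image[OF linG, of UNIV] by simp
  finally have surjG: "surj G" using spU by blast
  have injG: "inj G" using linG surjG by (simp add: linear_surjective_imp_injective)
  have hom: "G (br_model u v) = br (G u) (G v)" for u v
  proof -
    have "br (G u) (G v) = (u$1* v$2 - u$2* v$1) *\<^sub>R Z - (u$1* v$3 - u$3* v$1) *\<^sub>R A
        - (u$2* v$3 - u$3* v$2) *\<^sub>R B + ((u$1* v$4 - u$4* v$1) + (u$2* v$5 - u$5* v$2)) *\<^sub>R C"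
      unfolding G_def
      by (simp add: brsimps alt YX Cc Cc' ZA ZB AB YA XB0 YB anti[of A X] anti[of B X] anti[of Z X]
        anti[of B Y] anti[of A Y] anti[of Z Y] anti[of A Z] anti[of B Z] anti[of B A] C_def[symmetric] algebra_simps)
    moreover have "G (br_model u v) = (u$1* v$2 - u$2* v$1) *\<^sub>R Z - (u$1* v$3 - u$3* v$1) *\<^sub>R A
        - (u$2* v$3 - u$3* v$2) *\<^sub>R B + ((u$1* v$4 - u$4* v$1) + (u$2* v$5 - u$5* v$2)) *\<^sub>R C"
      unfolding G_def by (simp add: br_model_def wedge6_def algebra_simps)
    ultimately show ?thesis by simp
  qed
  define f where "f = inv G"
  have bijG: "bij G" using injG surjG by (rule bijI)
  have linf: "linear f" unfolding f_def using linG injG by (rule inj_linear_imp_inv_linear)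
  have bijf: "bij f" unfolding f_def using bijG by (rule bij_imp_bij_inv)
  have Gf: "G (f x) = x" for x unfolding f_def using surjG by (simp add: surj_f_inv_f)
  have fG: "f (G x) = x" for x unfolding f_def using injG by (simp add: inv_f_f)
  have "f (br x y) = br_model (f x) (f y)" for x y
  proof -
    have "f (br x y) = f (br (G (f x)) (G (f y)))" by (simp add: Gf)
    also have "\<dots> = f (G (br_model (f x) (f y)))" by (simp add: hom)
    also have "\<dots> = br_model (f x) (f y)" by (rule fG)
    finally show ?thesis .
  qed
  thus ?thesis unfolding lie_isomorphic_def using linf bijf by blast
qed

end

lemma (in cx) main: "lie_isomorphic br br_model"
proof -
  have "g 1 \<noteq> UNIV"
  proof
    assume "g 1 = UNIV"
    hence "dim (g 1) = 6" using dimU by simp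
    thus False using dn by simp
  qed
  then obtain X where X: "X \<notin> g 1" by blast
  have c: "cxX br J X" using X by (intro cxX.intro cxX_axioms.intro cx_axioms)
  have "1 \<le> dim (g 3)" "dim (g 3) < 3" using cxX.d3_bounds[OF c] by auto
  hence "dim (g 3) = 1 \<or> dim (g 3) = 2" by auto
  thus ?thesis using cxX.iso[OF c] cxX.no_d3[OF c] by blast
qed

lemma betti_dim:
  fixes br :: "real^6 \<Rightarrow> real^6 \<Rightarrow> real^6"
  assumes "betti1 br = 2"
  shows "dim (lcs br 1) = 4"
proof -
  have sub: "subspace (lcs br 1)" by (simp add: subspace_span)
  have "dim {y \<in> UNIV. \<forall>x \<in> lcs br 1. orthogonal x y} + dim (lcs br 1) = dim (UNIV :: (real^6) set)"
    by (rule dim_subspace_orthogonal_to_vectors[OF sub subspace_UNIV]) simp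
  moreover have "{y \<in> UNIV. \<forall>x \<in> lcs br 1. orthogonal x y} = {a::real^6. \<forall>x y. - (a \<bullet> br x y) = 0}"
  proof (intro set_eqI iffI)
    fix a assume "a \<in> {y \<in> UNIV. \<forall>x \<in> lcs br 1. orthogonal x y}"
    hence h: "\<forall>x \<in> lcs br 1. orthogonal x a" by simp
    have "br x y \<in> lcs br 1" for x y by (auto intro: span_base)
    thus "a \<in> {a::real^6. \<forall>x y. - (a \<bullet> br x y) = 0}" using h by (auto simp: orthogonal_def inner_commute)
  next
    fix a assume "a \<in> {a::real^6. \<forall>x y. - (a \<bullet> br x y) = 0}"
    hence h: "\<forall>x y. a \<bullet> br x y = 0" by simp
    have "{br x y | x y. y \<in> lcs br 0} \<subseteq> {z. a \<bullet> z = 0}" using h by auto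
    hence "span {br x y | x y. y \<in> lcs br 0} \<subseteq> {z. a \<bullet> z = 0}" by (rule span_minimal[OF _ subspace_hyperplane])
    hence "lcs br 1 \<subseteq> {z. a \<bullet> z = 0}" by simp
    thus "a \<in> {y \<in> UNIV. \<forall>x \<in> lcs br 1. orthogonal x y}" by (auto simp: orthogonal_def inner_commute)
  qed
  ultimately have "betti1 br + dim (lcs br 1) = 6" unfolding betti1_def by simp
  thus ?thesis using assms by simp
qed

theorem theorem3p1:
  fixes br :: "real^6 \<Rightarrow> real^6 \<Rightarrow> real^6"
  assumes "lie_algebra br"
    and "nilpotent_lie br"
    and "betti1 br = 2"
    and "\<exists>J. complex_structure br J"
  shows "lie_isomorphic br br_model"
proof -
  obtain J where J: "complex_structure br J" using assms(4) by blast
  have "cx br J"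
    using assms(1,2) J betti_dim[OF assms(3)]
    unfolding lie_algebra_def nilpotent_lie_def complex_structure_def
    by (intro cx.intro) auto
  thus ?thesis by (rule cx.main)
qed

end
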